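(* Let $f:\mathbb{R}^2\to\mathbb{R}^2$ be a smooth one-generic mapping having a cusp point at the origin with $f(\mathbf{0})=\mathbf{0}$. Let $L(x,y)=(ax-by,bx+ay)$ with $a^2+b^2=1$ and $g=L\circ f$. Then $\mathbf{0}$ is a cusp point of $g$, and if $F$, $G$ are the mappings associated with $f$, $g$ respectively, then $\det DG(\mathbf{0})=\det DF(\mathbf{0})$.
   Context: For a smooth $h:\mathbb{R}^2\to\mathbb{R}^2$ with $J_h=\det Dh$, the associated mapping is $H=Dh\cdot(-\partial J_h/\partial y,\ \partial J_h/\partial x)^T$. $f$ is one-generic if $dJ\ne0$ on $J^{-1}(0)$ where $J=\det Df$ (equivalently, $j^1f$ is transverse to the corank strata). A point $p\in S_1(f)=J^{-1}(0)$ with $T_pS_1(f)=\ker Df(p)$ is a cusp point if it is a simple zero of $dJ(\xi)$ on $S_1(f)$, $\xi$ a nonvanishing vector field along $S_1(f)$ in $\ker Df$. *)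

theory Defs
  imports "HOL-Analysis.Analysis"
begin

definition px :: "(real \<times> real \<Rightarrow> real) \<Rightarrow> real \<times> real \<Rightarrow> real" where
  "px \<phi> p = deriv (\<lambda>t. \<phi> (t, snd p)) (fst p)"

definition py :: "(real \<times> real \<Rightarrow> real) \<Rightarrow> real \<times> real \<Rightarrow> real" where
  "py \<phi> p = deriv (\<lambda>t. \<phi> (fst p, t)) (snd p)"

text \<open>Smooth (C-infinity) scalar functions: differentiable everywhere, with all
  partial derivatives again smooth.\<close>

coinductive smooth_fun :: "(real \<times> real \<Rightarrow> real) \<Rightarrow> bool" where
  "(\<forall>p. \<phi> differentiable (at p)) \<Longrightarrow> smooth_fun (px \<phi>) \<Longrightarrow> smooth_fun (py \<phi>)
    \<Longrightarrow> smooth_fun \<phi>"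

definition smooth_map :: "(real \<times> real \<Rightarrow> real \<times> real) \<Rightarrow> bool" where
  "smooth_map h \<longleftrightarrow> smooth_fun (\<lambda>p. fst (h p)) \<and> smooth_fun (\<lambda>p. snd (h p))"

definition Dmap :: "(real \<times> real \<Rightarrow> real \<times> real) \<Rightarrow> real \<times> real \<Rightarrow> real \<times> real \<Rightarrow> real \<times> real" where
  "Dmap h p v =
     (px (\<lambda>q. fst (h q)) p * fst v + py (\<lambda>q. fst (h q)) p * snd v,
      px (\<lambda>q. snd (h q)) p * fst v + py (\<lambda>q. snd (h q)) p * snd v)"

definition jac :: "(real \<times> real \<Rightarrow> real \<times> real) \<Rightarrow> real \<times> real \<Rightarrow> real" where
  "jac h p = px (\<lambda>q. fst (h q)) p * py (\<lambda>q. snd (h q)) p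
           - py (\<lambda>q. fst (h q)) p * px (\<lambda>q. snd (h q)) p"

definition assoc_map :: "(real \<times> real \<Rightarrow> real \<times> real) \<Rightarrow> real \<times> real \<Rightarrow> real \<times> real" where
  "assoc_map h p = Dmap h p (- py (jac h) p, px (jac h) p)"

definition one_generic :: "(real \<times> real \<Rightarrow> real \<times> real) \<Rightarrow> bool" where
  "one_generic h \<longleftrightarrow> (\<forall>p. jac h p = 0 \<longrightarrow> (px (jac h) p, py (jac h) p) \<noteq> (0, 0))"

definition S1 :: "(real \<times> real \<Rightarrow> real \<times> real) \<Rightarrow> (real \<times> real) set" where
  "S1 h = {p. jac h p = 0}"

text \<open>Cusp point: p \<in> S_1(h), T_p S_1(h) = ker Dh(p) (the tangent line of the
  regular level set J^{-1}(0) being ker dJ_p), and p is a simple zero on S_1(h) of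
  the function q \<mapsto> dJ_q(\<xi>(q)), where \<xi> is a smooth vector field, nonvanishing and
  in ker Dh along S_1(h) near p.  "Simple zero on S_1" means the derivative of
  this function along the curve S_1(h) at p, i.e. in the tangent direction
  (-J_y(p), J_x(p)), is nonzero.\<close>

definition dJ_along :: "(real \<times> real \<Rightarrow> real \<times> real) \<Rightarrow> (real \<times> real \<Rightarrow> real \<times> real) \<Rightarrow> real \<times> real \<Rightarrow> real" where
  "dJ_along h \<xi> q = px (jac h) q * fst (\<xi> q) + py (jac h) q * snd (\<xi> q)"

definition cusp_point :: "(real \<times> real \<Rightarrow> real \<times> real) \<Rightarrow> real \<times> real \<Rightarrow> bool" where
  "cusp_point h p \<longleftrightarrow>
     p \<in> S1 h \<and>
     {v. px (jac h) p * fst v + py (jac h) p * snd v = 0} = {v. Dmap h p v = (0, 0)} \<and>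
     (\<exists>U \<xi>. open U \<and> p \<in> U \<and> smooth_map \<xi> \<and>
        (\<forall>q \<in> U \<inter> S1 h. \<xi> q \<noteq> (0, 0) \<and> Dmap h q (\<xi> q) = (0, 0)) \<and>
        dJ_along h \<xi> p = 0 \<and>
        (- py (jac h) p) * px (dJ_along h \<xi>) p + px (jac h) p * py (dJ_along h \<xi>) p \<noteq> 0)"

definition detD :: "(real \<times> real \<Rightarrow> real \<times> real) \<Rightarrow> real \<times> real \<Rightarrow> real" where
  "detD H p = jac H p"

definition rot :: "real \<Rightarrow> real \<Rightarrow> real \<times> real \<Rightarrow> real \<times> real" where
  "rot a b v = (a * fst v - b * snd v, b * fst v + a * snd v)"

end

theory Submission
  imports Defs
begin

lemma px_diff:
  assumes "(\<phi>::real\<times>real\<Rightarrow>real) differentiable (at p)"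
  shows "(\<lambda>t. \<phi> (t, snd p)) differentiable (at (fst p))"
proof -
  have "((\<lambda>t::real. (t, snd p)) has_derivative (\<lambda>h. (h, 0))) (at (fst p))"
    by (intro has_derivative_Pair has_derivative_ident has_derivative_const)
  then have "(\<lambda>t::real. (t, snd p)) differentiable (at (fst p))"
    unfolding differentiable_def by blast
  moreover have "\<phi> differentiable (at ((\<lambda>t::real. (t, snd p)) (fst p)))" using assms by simp
  ultimately show ?thesis using differentiable_chain_at[of "\<lambda>t::real. (t, snd p)" "fst p" \<phi>]
    by (simp add: o_def)
qed

lemma py_diff:
  assumes "(\<phi>::real\<times>real\<Rightarrow>real) differentiable (at p)"
  shows "(\<lambda>t. \<phi> (fst p, t)) differentiable (at (snd p))"
proof -
  have "((\<lambda>t::real. (fst p, t)) has_derivative (\<lambda>h. (0, h))) (at (snd p))"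
    by (intro has_derivative_Pair has_derivative_ident has_derivative_const)
  then have "(\<lambda>t::real. (fst p, t)) differentiable (at (snd p))"
    unfolding differentiable_def by blast
  moreover have "\<phi> differentiable (at ((\<lambda>t::real. (fst p, t)) (snd p)))" using assms by simp
  ultimately show ?thesis using differentiable_chain_at[of "\<lambda>t::real. (fst p, t)" "snd p" \<phi>]
    by (simp add: o_def)
qed

lemma deriv_add_r:
  fixes u v :: "real \<Rightarrow> real"
  assumes "u differentiable (at x)" "v differentiable (at x)"
  shows "deriv (\<lambda>t. u t + v t) x = deriv u x + deriv v x"
proof -
  have "DERIV u x :> deriv u x" "DERIV v x :> deriv v x"
    using assms DERIV_deriv_iff_real_differentiable by blast+
  then have "DERIV (\<lambda>t. u t + v t) x :> deriv u x + deriv v x"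
    by (rule DERIV_add)
  then show ?thesis by (rule DERIV_imp_deriv)
qed

lemma deriv_diff_r:
  fixes u v :: "real \<Rightarrow> real"
  assumes "u differentiable (at x)" "v differentiable (at x)"
  shows "deriv (\<lambda>t. u t - v t) x = deriv u x - deriv v x"
proof -
  have "DERIV u x :> deriv u x" "DERIV v x :> deriv v x"
    using assms DERIV_deriv_iff_real_differentiable by blast+
  then have "DERIV (\<lambda>t. u t - v t) x :> deriv u x - deriv v x"
    by (rule DERIV_diff)
  then show ?thesis by (rule DERIV_imp_deriv)
qed

lemma deriv_mult_r:
  fixes u v :: "real \<Rightarrow> real"
  assumes "u differentiable (at x)" "v differentiable (at x)"
  shows "deriv (\<lambda>t. u t * v t) x = deriv u x * v x + u x * deriv v x"
proof -
  have "DERIV u x :> deriv u x" "DERIV v x :> deriv v x"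
    using assms DERIV_deriv_iff_real_differentiable by blast+
  then have "DERIV (\<lambda>t. u t * v t) x :> deriv u x * v x + u x * deriv v x"
    by (intro derivative_eq_intros) auto
  then show ?thesis by (rule DERIV_imp_deriv)
qed

lemma deriv_const_r: "deriv (\<lambda>t::real. c::real) x = 0"
  by (simp add: DERIV_imp_deriv)

lemma deriv_lin_r:
  fixes u v :: "real \<Rightarrow> real"
  assumes "u differentiable (at x)" "v differentiable (at x)"
  shows "deriv (\<lambda>t. a * u t - b * v t) x = a * deriv u x - b * deriv v x"
proof -
  have "DERIV u x :> deriv u x" "DERIV v x :> deriv v x"
    using assms DERIV_deriv_iff_real_differentiable by blast+
  then have "DERIV (\<lambda>t. a * u t - b * v t) x :> a * deriv u x - b * deriv v x"
    by (intro derivative_eq_intros) auto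
  then show ?thesis by (rule DERIV_imp_deriv)
qed

lemma deriv_lin2_r:
  fixes u v :: "real \<Rightarrow> real"
  assumes "u differentiable (at x)" "v differentiable (at x)"
  shows "deriv (\<lambda>t. b * u t + a * v t) x = b * deriv u x + a * deriv v x"
proof -
  have "DERIV u x :> deriv u x" "DERIV v x :> deriv v x"
    using assms DERIV_deriv_iff_real_differentiable by blast+
  then have "DERIV (\<lambda>t. b * u t + a * v t) x :> b * deriv u x + a * deriv v x"
    by (intro derivative_eq_intros) auto
  then show ?thesis by (rule DERIV_imp_deriv)
qed

inductive R :: "(real \<times> real \<Rightarrow> real) \<Rightarrow> bool" where
  Rs: "smooth_fun u \<Longrightarrow> R u"
| Rc: "R (\<lambda>q. c)"
| Ra: "R u \<Longrightarrow> R v \<Longrightarrow> R (\<lambda>q. u q + v q)"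
| Rd: "R u \<Longrightarrow> R v \<Longrightarrow> R (\<lambda>q. u q - v q)"
| Rm: "R u \<Longrightarrow> R v \<Longrightarrow> R (\<lambda>q. u q * v q)"

lemma R_diff: "R u \<Longrightarrow> u differentiable (at p)"
proof (induction rule: R.induct)
  case (Rs u) then show ?case by (cases rule: smooth_fun.cases) (metis prod.collapse)
next
  case (Rc c) show ?case by (rule differentiable_const)
next
  case (Ra u v) show ?case by (intro differentiable_add Ra.IH)
next
  case (Rd u v) show ?case by (intro differentiable_diff Rd.IH)
next
  case (Rm u v) show ?case by (intro differentiable_mult Rm.IH)
qed

lemma R_px: "R u \<Longrightarrow> R (px u) \<and> R (py u)"
proof (induction rule: R.induct)
  case (Rs u) then show ?case by (cases rule: smooth_fun.cases) (auto intro: R.Rs)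
next
  case (Rc c)
  have "px (\<lambda>q. c) = (\<lambda>q. 0)" "py (\<lambda>q. c) = (\<lambda>q. 0)"
    by (auto simp: px_def py_def deriv_const_r)
  then show ?case by (simp add: R.Rc)
next
  case (Ra u v)
  have "\<And>q. px (\<lambda>q. u q + v q) q = px u q + px v q" "\<And>q. py (\<lambda>q. u q + v q) q = py u q + py v q"
    unfolding px_def py_def by (intro deriv_add_r px_diff py_diff R_diff Ra.hyps)+
  then have "px (\<lambda>q. u q + v q) = (\<lambda>q. px u q + px v q)" "py (\<lambda>q. u q + v q) = (\<lambda>q. py u q + py v q)"
    by auto
  then show ?case using Ra.IH by (simp add: R.Ra)
next
  case (Rd u v)
  have "\<And>q. px (\<lambda>q. u q - v q) q = px u q - px v q" "\<And>q. py (\<lambda>q. u q - v q) q = py u q - py v q"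
    unfolding px_def py_def by (intro deriv_diff_r px_diff py_diff R_diff Rd.hyps)+
  then have "px (\<lambda>q. u q - v q) = (\<lambda>q. px u q - px v q)" "py (\<lambda>q. u q - v q) = (\<lambda>q. py u q - py v q)"
    by auto
  then show ?case using Rd.IH by (simp add: R.Rd)
next
  case (Rm u v)
  have "px (\<lambda>q. u q * v q) = (\<lambda>q. px u q * v q + u q * px v q)"
    "py (\<lambda>q. u q * v q) = (\<lambda>q. py u q * v q + u q * py v q)"
  proof -
    have "\<And>q. px (\<lambda>q. u q * v q) q = px u q * v q + u q * px v q"
      unfolding px_def using deriv_mult_r[OF px_diff[OF R_diff[OF Rm.hyps(1)]] px_diff[OF R_diff[OF Rm.hyps(2)]]] by simp
    moreover have "\<And>q. py (\<lambda>q. u q * v q) q = py u q * v q + u q * py v q"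
      unfolding py_def using deriv_mult_r[OF py_diff[OF R_diff[OF Rm.hyps(1)]] py_diff[OF R_diff[OF Rm.hyps(2)]]] by simp
    ultimately show "px (\<lambda>q. u q * v q) = (\<lambda>q. px u q * v q + u q * px v q)"
      "py (\<lambda>q. u q * v q) = (\<lambda>q. py u q * v q + u q * py v q)" by auto
  qed
  then show ?case using Rm.IH Rm.hyps by (simp add: R.Ra R.Rm)
qed

lemma px_lin:
  assumes "u differentiable (at p)" "v differentiable (at p)"
  shows "px (\<lambda>q. a * u q - b * v q) p = a * px u p - b * px v p"
    "py (\<lambda>q. a * u q - b * v q) p = a * py u p - b * py v p"
    "px (\<lambda>q. b * u q + a * v q) p = b * px u p + a * px v p"
    "py (\<lambda>q. b * u q + a * v q) p = b * py u p + a * py v p"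
  unfolding px_def py_def by (intro deriv_lin_r deriv_lin2_r px_diff py_diff assms)+

lemma rot_comp:
  assumes "(\<lambda>q. fst (h q)) differentiable (at p)" "(\<lambda>q. snd (h q)) differentiable (at p)"
  shows "jac (rot a b \<circ> h) p = (a\<^sup>2 + b\<^sup>2) * jac h p"
    "Dmap (rot a b \<circ> h) p v = rot a b (Dmap h p v)"
proof -
  have e1: "(\<lambda>q. fst ((rot a b \<circ> h) q)) = (\<lambda>q. a * fst (h q) - b * snd (h q))"
    and e2: "(\<lambda>q. snd ((rot a b \<circ> h) q)) = (\<lambda>q. b * fst (h q) + a * snd (h q))"
    by (auto simp: rot_def)
  note L = px_lin[OF assms, where a=a and b=b]
  show "jac (rot a b \<circ> h) p = (a\<^sup>2 + b\<^sup>2) * jac h p"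
    unfolding jac_def e1 e2 L by (simp add: power2_eq_square algebra_simps)
  show "Dmap (rot a b \<circ> h) p v = rot a b (Dmap h p v)"
    unfolding Dmap_def e1 e2 L by (simp add: rot_def algebra_simps)
qed

lemma rot_zero:
  assumes "a\<^sup>2 + b\<^sup>2 = (1::real)"
  shows "rot a b w = (0,0) \<longleftrightarrow> w = (0,0)"
proof
  assume h: "rot a b w = (0,0)"
  then have h1: "a * fst w - b * snd w = 0" and h2: "b * fst w + a * snd w = 0" by (auto simp: rot_def)
  have "fst w = (a\<^sup>2 + b\<^sup>2) * fst w" using assms by simp
  also have "\<dots> = a * (a * fst w - b * snd w) + b * (b * fst w + a * snd w)"
    by (simp add: power2_eq_square algebra_simps)
  finally have e1: "fst w = 0" using h1 h2 by simp
  have "snd w = (a\<^sup>2 + b\<^sup>2) * snd w" using assms by simp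
  also have "\<dots> = a * (b * fst w + a * snd w) - b * (a * fst w - b * snd w)"
    by (simp add: power2_eq_square algebra_simps)
  finally have e2: "snd w = 0" using h1 h2 by simp
  show "w = (0,0)" using e1 e2 by (simp add: prod_eq_iff)
qed (simp add: rot_def)

theorem mainTheorem11:
  fixes f :: "real \<times> real \<Rightarrow> real \<times> real" and a b :: real
  assumes "smooth_map f"
    and "one_generic f"
    and "cusp_point f (0, 0)"
    and "f (0, 0) = (0, 0)"
    and "a\<^sup>2 + b\<^sup>2 = 1"
  shows "cusp_point (rot a b \<circ> f) (0, 0) \<and>
         detD (assoc_map (rot a b \<circ> f)) (0, 0) = detD (assoc_map f) (0, 0)"
proof -
  let ?g = "rot a b \<circ> f"
  have R1: "R (\<lambda>q. fst (f q))" and R2: "R (\<lambda>q. snd (f q))"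
    using assms(1) by (auto simp: smooth_map_def intro: R.Rs)
  have D1: "\<And>p. (\<lambda>q. fst (f q)) differentiable (at p)" using R1 R_diff by blast
  have D2: "\<And>p. (\<lambda>q. snd (f q)) differentiable (at p)" using R2 R_diff by blast
  have jeq: "jac ?g = jac f"
    using rot_comp(1)[OF D1 D2] assms(5) by (auto simp: fun_eq_iff)
  have Deq: "\<And>p v. Dmap ?g p v = rot a b (Dmap f p v)" using rot_comp(2)[OF D1 D2] .
  have Dz: "\<And>p v. Dmap ?g p v = (0,0) \<longleftrightarrow> Dmap f p v = (0,0)"
    using Deq rot_zero[OF assms(5)] by simp
  have Seq: "S1 ?g = S1 f" by (simp add: S1_def jeq)
  have dJeq: "dJ_along ?g = dJ_along f" by (simp add: fun_eq_iff dJ_along_def jeq)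
  have cusp: "cusp_point ?g (0,0)"
    using assms(3) unfolding cusp_point_def Seq dJeq jeq Dz by simp
  have aeq: "assoc_map ?g = rot a b \<circ> assoc_map f"
    by (simp add: fun_eq_iff assoc_map_def Deq jeq)
  have RJ: "R (jac f)"
  proof -
    have "jac f = (\<lambda>p. px (\<lambda>q. fst (f q)) p * py (\<lambda>q. snd (f q)) p
           - py (\<lambda>q. fst (f q)) p * px (\<lambda>q. snd (f q)) p)" by (simp add: fun_eq_iff jac_def)
    then show ?thesis using R_px[OF R1] R_px[OF R2] by (simp add: R.Rd R.Rm)
  qed
  have A1: "(\<lambda>q. fst (assoc_map f q)) = (\<lambda>q. px (\<lambda>q. fst (f q)) q * ((\<lambda>q. 0) q - py (jac f) q)
      + py (\<lambda>q. fst (f q)) q * px (jac f) q)"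
    and A2: "(\<lambda>q. snd (assoc_map f q)) = (\<lambda>q. px (\<lambda>q. snd (f q)) q * ((\<lambda>q. 0) q - py (jac f) q)
      + py (\<lambda>q. snd (f q)) q * px (jac f) q)"
    by (simp_all add: fun_eq_iff assoc_map_def Dmap_def)
  have "R (\<lambda>q. fst (assoc_map f q))" "R (\<lambda>q. snd (assoc_map f q))"
    unfolding A1 A2 using R_px[OF R1] R_px[OF R2] R_px[OF RJ]
    by (intro R.Ra R.Rm R.Rd R.Rc; simp)+
  then have "jac (rot a b \<circ> assoc_map f) (0,0) = (a\<^sup>2 + b\<^sup>2) * jac (assoc_map f) (0,0)"
    by (intro rot_comp(1) R_diff)
  then show ?thesis using cusp aeq assms(5) by (simp add: detD_def)
qed

end
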